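(* For all integers $n\geq 0$ and $i\geq 1$, $$\bar a_{3i+2}(3n+2)\equiv 0 \pmod 3.$$
   Context: For $|q|<1$ and integers $m\geq 1$, write $f_m:=\prod_{j\geq 1}(1-q^{jm})$. For an integer $c\geq 1$, the generalized overcubic partition function $\bar a_c(n)$ is defined by $$\sum_{n\geq 0}\bar a_c(n)q^n=\frac{f_4^{c-1}}{f_1^2f_2^{2c-3}}.$$ *)

theory Defs
  imports "HOL-Computational_Algebra.Formal_Power_Series"
begin

(* f_m = prod_{j>=1} (1 - q^(jm)) as a formal power series over the rationals.
   Its n-th coefficient equals that of the finite product over j = 1..n
   (factors with j > n do not affect coefficients of degree <= n when m >= 1). *)
definition euler_f :: "nat \<Rightarrow> rat fps" where
  "euler_f m = Abs_fps (\<lambda>n. fps_nth (\<Prod>j\<in>{1..n}. (1 - fps_X ^ (j * m))) n)"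

(* sum abar_c(n) q^n = f_4^(c-1) / (f_1^2 f_2^(2c-3))
   = f_4^(c-1) f_2^3 / (f_1^2 f_2^(2c))  (valid for every c >= 1) *)
definition overcubic_gf :: "nat \<Rightarrow> rat fps" where
  "overcubic_gf c = euler_f 4 ^ (c - 1) * euler_f 2 ^ 3
      * inverse (euler_f 1 ^ 2 * euler_f 2 ^ (2 * c))"

definition abar :: "nat \<Rightarrow> nat \<Rightarrow> rat" where
  "abar c n = fps_nth (overcubic_gf c) n"

end

theory Submission
  imports Defs
begin

unbundle fps_syntax


definition eqto :: "nat \<Rightarrow> rat fps \<Rightarrow> rat fps \<Rightarrow> bool" where
  "eqto M A B \<longleftrightarrow> (\<forall>k\<le>M. A $ k = B $ k)"

lemma eqto_refl[simp]: "eqto M A A" by (simp add: eqto_def)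
lemma eqto_sym: "eqto M A B \<Longrightarrow> eqto M B A" by (simp add: eqto_def)
lemma eqto_trans: "eqto M A B \<Longrightarrow> eqto M B C \<Longrightarrow> eqto M A C" by (simp add: eqto_def)

lemma eqto_mult: assumes "eqto M A B" "eqto M C D" shows "eqto M (A*C) (B*D)"
  unfolding eqto_def
proof (intro allI impI)
  fix k assume k: "k \<le> M"
  show "(A*C) $ k = (B*D) $ k" unfolding fps_mult_nth
    by (rule sum.cong) (use assms k in \<open>auto simp: eqto_def\<close>)
qed

lemma eqto_add: "eqto M A B \<Longrightarrow> eqto M C D \<Longrightarrow> eqto M (A+C) (B+D)"
  by (simp add: eqto_def)
lemma eqto_diff: "eqto M A B \<Longrightarrow> eqto M C D \<Longrightarrow> eqto M (A-C) (B-D)"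
  by (simp add: eqto_def)

lemma eqto_power: "eqto M A B \<Longrightarrow> eqto M (A^n) (B^n)"
  by (induction n) (auto intro: eqto_mult)

lemma eqto_sum: "(\<And>x. x \<in> S \<Longrightarrow> eqto M (f x) (g x)) \<Longrightarrow> eqto M (sum f S) (sum g S)"
  by (induction S rule: infinite_finite_induct) (auto intro: eqto_add)

lemma eqto_prod: "(\<And>x. x \<in> S \<Longrightarrow> eqto M (f x) (g x)) \<Longrightarrow> eqto M (prod f S) (prod g S)"
  by (induction S rule: infinite_finite_induct) (auto intro: eqto_mult)

lemma eqto_cancel: assumes "eqto M (A*P) (B*P)" "P $ 0 \<noteq> 0" shows "eqto M A B"
proof -
  have "eqto M (A*P*inverse P) (B*P*inverse P)" by (rule eqto_mult[OF assms(1) eqto_refl])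
  thus ?thesis using inverse_mult_eq_1'[OF assms(2)] by (simp add: mult.assoc)
qed

lemma eqto_inverse: assumes "eqto M A B" "A $ 0 \<noteq> 0" shows "eqto M (inverse A) (inverse B)"
proof -
  have B0: "B $ 0 \<noteq> 0" using assms by (auto simp: eqto_def)
  have "eqto M (inverse A * A) (inverse B * B)"
    using inverse_mult_eq_1[OF assms(2)] inverse_mult_eq_1[OF B0] by simp
  hence "eqto M (inverse A * B) (inverse B * B)"
    using eqto_mult[OF eqto_refl assms(1), of "inverse A"] eqto_trans eqto_sym by blast
  thus ?thesis using B0 eqto_cancel by blast
qed

lemma pow_nth_small: assumes "Y $ 0 = 0" "i < j" shows "(Y ^ j) $ i = (0::rat)"
  using assms(2)
proof (induction j arbitrary: i)
  case 0 then show ?case by simp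
next
  case (Suc j)
  have "(Y * Y^j) $ i = (\<Sum>k=0..i. Y$k * (Y^j)$(i-k))" by (rule fps_mult_nth)
  also have "\<dots> = 0"
  proof (rule sum.neutral, intro ballI)
    fix k assume "k \<in> {0..i}"
    show "Y$k * (Y^j)$(i-k) = 0"
    proof (cases "k = 0")
      case True then show ?thesis using assms(1) by simp
    next
      case False then show ?thesis using Suc.IH[of "i-k"] Suc.prems \<open>k \<in> {0..i}\<close> by simp
    qed
  qed
  finally show ?case by simp
qed

lemma eqto_pow_zero: "Y $ 0 = 0 \<Longrightarrow> M < j \<Longrightarrow> eqto M (Y ^ j) 0"
  by (auto simp: eqto_def pow_nth_small)

lemma stab: assumes "\<And>j. M < j \<Longrightarrow> eqto M (f j) 1" "M \<le> K"
  shows "eqto M (\<Prod>j\<in>{1..K}. f j) (\<Prod>j\<in>{1..M}. f j)"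
  using assms(2)
proof (induction K rule: dec_induct)
  case base then show ?case by simp
next
  case (step K)
  have "(\<Prod>j\<in>{1..Suc K}. f j) = (\<Prod>j\<in>{1..K}. f j) * f (Suc K)"
    by (simp add: prod.nat_ivl_Suc' mult.commute)
  moreover have "eqto M ((\<Prod>j\<in>{1..K}. f j) * f (Suc K)) ((\<Prod>j\<in>{1..M}. f j) * 1)"
    by (rule eqto_mult[OF step(3) assms(1)]) (use step in auto)
  ultimately show ?case by simp
qed



definition prodY :: "rat fps \<Rightarrow> nat \<Rightarrow> nat \<Rightarrow> rat fps" where
  "prodY Y m K = (\<Prod>j\<in>{1..K}. (1 - Y ^ (j * m)))"

lemma prod_nth0: "(prod f S) $ 0 = (\<Prod>x\<in>S. f x $ 0 :: rat)"
  by (induction S rule: infinite_finite_induct) auto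

lemma prodY_0: assumes "Y $ 0 = 0" "1 \<le> m" shows "prodY Y m K $ 0 = 1"
  unfolding prodY_def prod_nth0 using assms by (intro prod.neutral) (auto simp: fps_power_zeroth)

lemma prodY_stab: assumes "Y $ 0 = 0" "1 \<le> m" "M \<le> K"
  shows "eqto M (prodY Y m K) (prodY Y m M)"
  unfolding prodY_def
proof (rule stab[OF _ assms(3)])
  fix j assume j: "M < j"
  have "M < j * m" using j assms(2) by (metis less_le_trans mult_le_mono2 nat_mult_1_right)
  then have "eqto M (1 - Y^(j*m)) (1 - 0)"
    by (intro eqto_diff eqto_refl eqto_pow_zero assms(1))
  then show "eqto M (1 - Y^(j*m)) 1" by simp
qed

lemma euler_eqto: assumes "1 \<le> m" "M \<le> K" shows "eqto M (euler_f m) (prodY fps_X m K)"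
  unfolding eqto_def
proof (intro allI impI)
  fix k assume k: "k \<le> M"
  have "euler_f m $ k = prodY fps_X m k $ k" by (simp add: euler_f_def prodY_def)
  also have "\<dots> = prodY fps_X m K $ k"
    using prodY_stab[of fps_X m k K] assms k by (simp add: eqto_def)
  finally show "euler_f m $ k = prodY fps_X m K $ k" .
qed

definition Tfin :: "nat \<Rightarrow> nat \<Rightarrow> rat fps" where
  "Tfin c K = prodY fps_X 4 K ^ (c - 1) * prodY fps_X 2 K ^ 3
      * inverse (prodY fps_X 1 K ^ 2 * prodY fps_X 2 K ^ (2 * c))"

lemma abar_Tfin: assumes "M \<le> K" shows "abar c M = Tfin c K $ M"
proof -
  have e: "\<And>m. 1 \<le> m \<Longrightarrow> eqto M (euler_f m) (prodY fps_X m K)" using euler_eqto assms by blast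
  have "eqto M (overcubic_gf c) (Tfin c K)"
    unfolding overcubic_gf_def Tfin_def
    by (intro eqto_mult eqto_power eqto_inverse e)
       (simp_all add: fps_power_zeroth euler_f_def prod_nth0)
  then show ?thesis by (simp add: eqto_def abar_def)
qed



definition intc :: "rat fps \<Rightarrow> bool" where "intc A \<longleftrightarrow> (\<forall>k. A $ k \<in> \<int>)"
definition d3 :: "rat \<Rightarrow> bool" where "d3 x \<longleftrightarrow> x / 3 \<in> \<int>"
definition div3 :: "rat fps \<Rightarrow> bool" where "div3 A \<longleftrightarrow> (\<forall>k. d3 (A $ k))"
definition cong3 :: "rat fps \<Rightarrow> rat fps \<Rightarrow> bool" where "cong3 A B \<longleftrightarrow> div3 (A - B)"
definition sup3 :: "rat fps \<Rightarrow> bool" where "sup3 A \<longleftrightarrow> (\<forall>k. k mod 3 \<noteq> 0 \<longrightarrow> A $ k = 0)"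
definition goodM :: "nat \<Rightarrow> rat fps \<Rightarrow> bool" where
  "goodM M A \<longleftrightarrow> (\<forall>k\<le>M. k mod 3 = 2 \<longrightarrow> d3 (A $ k))"

lemma d3_0[simp]: "d3 0" by (simp add: d3_def)
lemma d3_add: "d3 x \<Longrightarrow> d3 y \<Longrightarrow> d3 (x + y)" unfolding d3_def by (metis Ints_add add_divide_distrib)
lemma d3_diff: "d3 x \<Longrightarrow> d3 y \<Longrightarrow> d3 (x - y)" unfolding d3_def by (metis Ints_diff diff_divide_distrib)
lemma d3_mult: "d3 x \<Longrightarrow> y \<in> \<int> \<Longrightarrow> d3 (x * y)" unfolding d3_def
  by (metis Ints_mult times_divide_eq_left)
lemma d3_mult': "x \<in> \<int> \<Longrightarrow> d3 y \<Longrightarrow> d3 (x * y)" using d3_mult by (metis mult.commute)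
lemma d3_sum: "(\<And>x. x \<in> S \<Longrightarrow> d3 (f x)) \<Longrightarrow> d3 (sum f S)"
  by (induction S rule: infinite_finite_induct) (auto intro: d3_add)
lemma d3_3: "x \<in> \<int> \<Longrightarrow> d3 (3 * x)" by (simp add: d3_def)

lemma intc_mult: "intc A \<Longrightarrow> intc B \<Longrightarrow> intc (A * B)"
  unfolding intc_def fps_mult_nth by (auto intro!: Ints_sum Ints_mult)
lemma intc_add: "intc A \<Longrightarrow> intc B \<Longrightarrow> intc (A + B)" unfolding intc_def by auto
lemma intc_diff: "intc A \<Longrightarrow> intc B \<Longrightarrow> intc (A - B)" unfolding intc_def by auto
lemma intc_uminus: "intc A \<Longrightarrow> intc (- A)" unfolding intc_def by auto
lemma intc_1[simp]: "intc 1" unfolding intc_def by (simp add: fps_one_nth)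
lemma intc_X[simp]: "intc fps_X" unfolding intc_def by (simp add: fps_X_nth)
lemma intc_power: "intc A \<Longrightarrow> intc (A ^ n)" by (induction n) (auto intro: intc_mult)
lemma intc_prod: "(\<And>x. x \<in> S \<Longrightarrow> intc (f x)) \<Longrightarrow> intc (prod f S)"
  by (induction S rule: infinite_finite_induct) (auto intro: intc_mult)
lemma intc_prodY: "intc Y \<Longrightarrow> intc (prodY Y m K)"
  unfolding prodY_def by (intro intc_prod intc_diff intc_1 intc_power)

lemma coeff_rec: assumes "A * D = N" "D $ 0 = (c::rat)"
  shows "A $ n * c = N $ n - (\<Sum>i<n. A $ i * D $ (n - i))"
proof -
  have "N $ n = (\<Sum>i=0..n. A$i * D$(n-i))" using assms(1) fps_mult_nth by metis
  also have "\<dots> = (\<Sum>i<n. A$i * D$(n-i)) + A $ n * c"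
    using assms(2) by (simp add: atLeast0AtMost lessThan_Suc_atMost[symmetric])
  finally show ?thesis by simp
qed

lemma intc_inverse: assumes "intc D" "D $ 0 = 1" shows "intc (inverse D)"
proof -
  have eq: "inverse D * D = 1" using assms(2) by (intro inverse_mult_eq_1) simp
  have "inverse D $ n \<in> \<int>" for n
  proof (induction n rule: less_induct)
    case (less n)
    have "inverse D $ n * 1 = 1 $ n - (\<Sum>i<n. inverse D $ i * D $ (n - i))"
      by (rule coeff_rec[OF eq assms(2)])
    moreover have "1 $ n - (\<Sum>i<n. inverse D $ i * D $ (n - i)) \<in> \<int>"
      using less assms(1) unfolding intc_def by (auto simp: fps_one_nth intro!: Ints_diff Ints_sum Ints_mult)
    ultimately show ?case by simp
  qed
  then show ?thesis by (simp add: intc_def)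
qed

lemma sup3_mult: assumes "sup3 A" "sup3 B" shows "sup3 (A * B)"
  unfolding sup3_def
proof (intro allI impI)
  fix k :: nat assume k: "k mod 3 \<noteq> 0"
  show "(A*B) $ k = 0" unfolding fps_mult_nth
  proof (rule sum.neutral, intro ballI)
    fix i assume i: "i \<in> {0..k}"
    have "i mod 3 \<noteq> 0 \<or> (k - i) mod 3 \<noteq> 0" using k i by auto presburger
    then show "A$i * B$(k-i) = 0" using assms by (auto simp: sup3_def)
  qed
qed
lemma sup3_1[simp]: "sup3 1" by (simp add: sup3_def fps_one_nth)
lemma sup3_power: "sup3 A \<Longrightarrow> sup3 (A ^ n)" by (induction n) (auto intro: sup3_mult)
lemma sup3_prod: "(\<And>x. x \<in> S \<Longrightarrow> sup3 (f x)) \<Longrightarrow> sup3 (prod f S)"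
  by (induction S rule: infinite_finite_induct) (auto intro: sup3_mult)
lemma sup3_prodY: "sup3 (prodY fps_X (3 * m) K)"
  unfolding prodY_def
  by (intro sup3_prod) (auto simp: sup3_def fps_one_nth)

lemma sup3_inverse: assumes "sup3 D" "D $ 0 \<noteq> 0" shows "sup3 (inverse D)"
proof -
  have eq: "inverse D * D = 1" using assms(2) by (intro inverse_mult_eq_1) 
  have "n mod 3 \<noteq> 0 \<longrightarrow> inverse D $ n = 0" for n
  proof (induction n rule: less_induct)
    case (less n)
    show ?case
    proof
      assume n: "n mod 3 \<noteq> 0"
      have "inverse D $ n * D $ 0 = 1 $ n - (\<Sum>i<n. inverse D $ i * D $ (n - i))"
        by (rule coeff_rec[OF eq refl])
      also have "\<dots> = 0"
      proof -
        have "1 $ n = (0::rat)" using n by (auto simp: fps_one_nth)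
        moreover have "(\<Sum>i<n. inverse D $ i * D $ (n - i)) = 0"
        proof (rule sum.neutral, intro ballI)
          fix i assume i: "i \<in> {..<n}"
          have "i mod 3 \<noteq> 0 \<or> (n - i) mod 3 \<noteq> 0" using n i by auto presburger
          then show "inverse D $ i * D $ (n - i) = 0"
            using less i assms(1) by (auto simp: sup3_def)
        qed
        ultimately show ?thesis by simp
      qed
      finally show "inverse D $ n = 0" using assms(2) by simp
    qed
  qed
  then show ?thesis by (simp add: sup3_def)
qed

lemma div3_add: "div3 A \<Longrightarrow> div3 B \<Longrightarrow> div3 (A + B)" unfolding div3_def by (auto intro: d3_add)
lemma div3_mult: assumes "div3 A" "intc B" shows "div3 (A * B)"
  using assms unfolding div3_def intc_def fps_mult_nth by (auto intro!: d3_sum d3_mult)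
lemma div3_mult': assumes "intc A" "div3 B" shows "div3 (A * B)"
  using div3_mult[OF assms(2,1)] by (simp add: mult.commute)

lemma cong3_refl[simp]: "cong3 A A" by (simp add: cong3_def div3_def)
lemma cong3_sym: "cong3 A B \<Longrightarrow> cong3 B A"
  unfolding cong3_def div3_def d3_def by (metis Ints_minus minus_diff_eq minus_divide_left fps_neg_nth)
lemma cong3_trans: "cong3 A B \<Longrightarrow> cong3 B C \<Longrightarrow> cong3 A C"
  unfolding cong3_def using div3_add[of "A - B" "B - C"] by simp

lemma cong3_mult: assumes "cong3 A A'" "cong3 B B'" "intc A'" "intc B"
  shows "cong3 (A * B) (A' * B')"
proof -
  have "A * B - A' * B' = (A - A') * B + A' * (B - B')" by (simp add: algebra_simps)
  moreover have "div3 ((A - A') * B)" using assms by (intro div3_mult) (auto simp: cong3_def)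
  moreover have "div3 (A' * (B - B'))" using assms by (intro div3_mult') (auto simp: cong3_def)
  ultimately show ?thesis unfolding cong3_def by (simp add: div3_add)
qed

lemma cong3_power: assumes "cong3 A A'" "intc A" "intc A'" shows "cong3 (A ^ n) (A' ^ n)"
  by (induction n) (auto intro!: cong3_mult assms intc_power)

lemma cong3_prod: assumes "\<And>x. x \<in> S \<Longrightarrow> cong3 (f x) (g x)" "\<And>x. x \<in> S \<Longrightarrow> intc (f x)"
    "\<And>x. x \<in> S \<Longrightarrow> intc (g x)"
  shows "cong3 (prod f S) (prod g S)"
  using assms by (induction S rule: infinite_finite_induct) (auto intro!: cong3_mult intc_prod)

lemma cube: assumes "intc A" shows "cong3 ((1 - A) ^ 3) (1 - A ^ 3)"
proof -
  have "(1 - A) ^ 3 - (1 - A ^ 3) = fps_const 3 * (A * A - A)"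
    by (simp add: fps_numeral_fps_const[symmetric] algebra_simps power3_eq_cube numeral_3_eq_3)
  moreover have "intc (A * A - A)" using assms by (auto intro: intc_mult intc_diff)
  ultimately show ?thesis unfolding cong3_def div3_def intc_def
    by (metis d3_3 fps_mult_left_const_nth)
qed

lemma prodY_cube: assumes "intc Y" shows "cong3 (prodY Y m K ^ 3) (prodY Y (3 * m) K)"
proof -
  have "prodY Y m K ^ 3 = (\<Prod>j\<in>{1..K}. (1 - Y ^ (j * m)) ^ 3)"
    unfolding prodY_def by (simp add: prod_power_distrib)
  moreover have "cong3 (\<Prod>j\<in>{1..K}. (1 - Y ^ (j * m)) ^ 3) (\<Prod>j\<in>{1..K}. (1 - (Y ^ (j * m)) ^ 3))"
    using assms by (intro cong3_prod cube intc_power intc_diff intc_1) auto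
  moreover have "(\<Prod>j\<in>{1..K}. (1 - (Y ^ (j * m)) ^ 3)) = prodY Y (3 * m) K"
    unfolding prodY_def by (simp add: power_mult[symmetric] ac_simps)
  ultimately show ?thesis by simp
qed

lemma cong3_frac: assumes "intc N" "intc N'" "intc D" "intc D'" "D $ 0 = 1" "D' $ 0 = 1"
  "cong3 (N * D') (N' * D)"
  shows "cong3 (N * inverse D) (N' * inverse D')"
proof -
  have i1: "inverse D * D = 1" "inverse D' * D' = 1" using assms(5,6) by (auto intro!: inverse_mult_eq_1)
  have "N * inverse D - N' * inverse D' = (N * D' - N' * D) * (inverse D * inverse D')"
  proof -
    have "(N * D' - N' * D) * (inverse D * inverse D') = N * (inverse D' * D') * inverse D - N' * (inverse D * D) * inverse D'"
      by (simp add: algebra_simps)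
    then show ?thesis using i1 by simp
  qed
  moreover have "intc (inverse D * inverse D')" using assms by (intro intc_mult intc_inverse)
  ultimately show ?thesis using assms(7) unfolding cong3_def by (simp add: div3_mult)
qed

lemma good_cong: assumes "cong3 A B" "goodM M B" shows "goodM M A"
proof -
  have "A $ k = (A - B) $ k + B $ k" for k by simp
  then show ?thesis using assms unfolding goodM_def cong3_def div3_def by (metis d3_add)
qed

lemma good_mult_sup3: assumes "goodM M W" "intc W" "intc H" "sup3 H" shows "goodM M (W * H)"
  unfolding goodM_def
proof (intro allI impI)
  fix k assume k: "k \<le> M" "k mod 3 = 2"
  show "d3 ((W * H) $ k)" unfolding fps_mult_nth
  proof (rule d3_sum)
    fix i assume i: "i \<in> {0..k}"
    show "d3 (W $ i * H $ (k - i))"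
    proof (cases "(k - i) mod 3 = 0")
      case True
      then have "i mod 3 = 2" using k i by auto presburger
      then show ?thesis using assms(1,3) i k by (auto simp: goodM_def intc_def intro!: d3_mult)
    next
      case False then show ?thesis using assms(4) by (simp add: sup3_def)
    qed
  qed
qed



fun qb :: "rat fps \<Rightarrow> nat \<Rightarrow> nat \<Rightarrow> rat fps" where
  "qb Y 0 m = (if m = 0 then 1 else 0)"
| "qb Y (Suc N) m = Y ^ m * qb Y N m + (if m = 0 then 0 else qb Y N (m - 1))"

lemma qb_zero: "N < m \<Longrightarrow> qb Y N m = 0"
  by (induction N arbitrary: m) auto

lemma qb_0[simp]: "qb Y N 0 = 1"
  by (induction N) auto

lemma qb_pascal2: "qb Y (Suc N) (Suc m) = qb Y N (Suc m) + Y ^ (N - m) * qb Y N m"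
proof (induction N arbitrary: m)
  case 0 then show ?case by simp
next
  case (Suc N)
  show ?case
  proof (cases m)
    case 0
    have "qb Y (Suc (Suc N)) (Suc 0) = Y * qb Y (Suc N) (Suc 0) + 1" by simp
    also have "\<dots> = Y * (qb Y N (Suc 0) + Y ^ N) + 1" using Suc.IH[of 0] by simp
    also have "\<dots> = qb Y (Suc N) (Suc 0) + Y ^ (Suc N - 0) * qb Y (Suc N) 0"
      by (simp add: algebra_simps)
    finally show ?thesis using 0 by simp
  next
    case (Suc m')
    have "qb Y (Suc (Suc N)) (Suc m) = Y ^ Suc m * qb Y (Suc N) (Suc m) + qb Y (Suc N) m" by simp
    also have "\<dots> = Y ^ Suc m * (qb Y N (Suc m) + Y ^ (N - m) * qb Y N m)
                   + (qb Y N (Suc m') + Y ^ (N - m') * qb Y N m')"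
      using Suc.IH[of m] Suc.IH[of m'] Suc by simp
    also have "\<dots> = (Y ^ Suc m * qb Y N (Suc m) + qb Y N m)
                   + Y ^ (Suc N - m) * (Y ^ m * qb Y N m + qb Y N m')"
    proof (cases "m \<le> N")
      case True
      have e: "Y ^ Suc m * Y ^ (N - m) = Y ^ (Suc N - m) * Y ^ m"
        using True by (simp add: power_add[symmetric])
      have "N - m' = Suc N - m" using Suc by simp
      then show ?thesis using e Suc by (simp add: distrib_left mult.assoc[symmetric])
    next
      case False
      then have "qb Y N m = 0" by (simp add: qb_zero)
      moreover have "N - m' = Suc N - m" using Suc by simp
      ultimately show ?thesis using Suc by (simp add: algebra_simps)
    qed
    also have "\<dots> = qb Y (Suc N) (Suc m) + Y ^ (Suc N - m) * qb Y (Suc N) m"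
      using Suc by simp
    finally show ?thesis .
  qed
qed

definition tri :: "int \<Rightarrow> nat" where "tri x = nat (x * (x - 1) div 2)"

lemma tri_lemma: "2 * int (tri x) = x * (x - 1)"
proof -
  have ev: "even (x * (x - 1))" by auto
  have nn: "0 \<le> x * (x - 1)"
    by (cases "x \<ge> 1") (auto intro: mult_nonneg_nonneg mult_nonpos_nonpos)
  show ?thesis using ev nn unfolding tri_def by auto
qed

lemma ex1: "m + tri (int m - int (Suc a)) = Suc a + tri (int m - int a)"
proof -
  have h1: "2 * int (tri (int m - int (Suc a))) = (int m - int (Suc a)) * (int m - int (Suc a) - 1)"
    by (rule tri_lemma)
  have h2: "2 * int (tri (int m - int a)) = (int m - int a) * (int m - int a - 1)" by (rule tri_lemma)
  have "int (m + tri (int m - int (Suc a))) = int (Suc a + tri (int m - int a))"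
    using h1 h2 by (simp add: algebra_simps)
  then show ?thesis by (simp only: of_nat_eq_iff)
qed

lemma ex2: assumes "m \<le> a + b"
  shows "(a + b - m) + tri (int (Suc m) - int a) = b + tri (int m - int a)"
proof -
  have h1: "2 * int (tri (int (Suc m) - int a)) = (int (Suc m) - int a) * (int (Suc m) - int a - 1)"
    by (rule tri_lemma)
  have h2: "2 * int (tri (int m - int a)) = (int m - int a) * (int m - int a - 1)" by (rule tri_lemma)
  have "int ((a + b - m) + tri (int (Suc m) - int a)) = int (b + tri (int m - int a))"
    using h1 h2 assms by (simp add: algebra_simps of_nat_diff)
  then show ?thesis by (simp only: of_nat_eq_iff)
qed

definition LHS :: "rat fps \<Rightarrow> nat \<Rightarrow> nat \<Rightarrow> rat fps" where
  "LHS Y a b = (\<Prod>j\<in>{1..a}. (1 + Y ^ j)) * (\<Prod>j\<in>{..<b}. (1 + Y ^ j))"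
definition RHS :: "rat fps \<Rightarrow> nat \<Rightarrow> nat \<Rightarrow> rat fps" where
  "RHS Y a b = (\<Sum>m\<in>{0..a+b}. qb Y (a+b) m * Y ^ tri (int m - int a))"

lemma RHS_a: "RHS Y (Suc a) b = (1 + Y ^ Suc a) * RHS Y a b"
proof -
  define N where "N = a + b"
  define S where "S = (\<Sum>m\<in>{0..N}. qb Y N m * Y ^ tri (int m - int a))"
  have "RHS Y (Suc a) b = (\<Sum>m\<in>{0..Suc N}. qb Y (Suc N) m * Y ^ tri (int m - int (Suc a)))"
    by (simp add: RHS_def N_def del: qb.simps)
  also have "\<dots> = (\<Sum>m\<in>{0..Suc N}. Y ^ m * qb Y N m * Y ^ tri (int m - int (Suc a)))
       + (\<Sum>m\<in>{0..Suc N}. (if m = 0 then 0 else qb Y N (m - 1)) * Y ^ tri (int m - int (Suc a)))"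
    by (simp only: qb.simps distrib_right sum.distrib)
  also have "(\<Sum>m\<in>{0..Suc N}. Y ^ m * qb Y N m * Y ^ tri (int m - int (Suc a)))
      = Y ^ Suc a * S"
  proof -
    have "(\<Sum>m\<in>{0..Suc N}. Y ^ m * qb Y N m * Y ^ tri (int m - int (Suc a)))
        = (\<Sum>m\<in>{0..N}. Y ^ m * qb Y N m * Y ^ tri (int m - int (Suc a)))"
      by (simp add: qb_zero del: qb.simps)
    also have "\<dots> = (\<Sum>m\<in>{0..N}. Y ^ Suc a * (qb Y N m * Y ^ tri (int m - int a)))"
    proof (rule sum.cong[OF refl])
      fix m
      have e: "Y ^ m * Y ^ tri (int m - int (Suc a)) = Y ^ Suc a * Y ^ tri (int m - int a)"
        using ex1[of m a] by (simp only: power_add[symmetric])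
      have "Y ^ m * qb Y N m * Y ^ tri (int m - int (Suc a)) = qb Y N m * (Y ^ m * Y ^ tri (int m - int (Suc a)))"
        by (simp only: mult_ac)
      also have "\<dots> = qb Y N m * (Y ^ Suc a * Y ^ tri (int m - int a))" by (simp only: e)
      also have "\<dots> = Y ^ Suc a * (qb Y N m * Y ^ tri (int m - int a))" by (simp only: mult_ac)
      finally show "Y ^ m * qb Y N m * Y ^ tri (int m - int (Suc a)) = Y ^ Suc a * (qb Y N m * Y ^ tri (int m - int a))" .
    qed
    finally show ?thesis by (simp only: S_def sum_distrib_left)
  qed
  also have "(\<Sum>m\<in>{0..Suc N}. (if m = 0 then 0 else qb Y N (m - 1)) * Y ^ tri (int m - int (Suc a)))
      = S"
    unfolding S_def by (subst sum.atLeast0_atMost_Suc_shift) (simp del: qb.simps)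
  also have "RHS Y a b = S" by (simp add: RHS_def N_def S_def)
  ultimately show ?thesis by (simp add: distrib_right)
qed

lemma RHS_b: "RHS Y a (Suc b) = (1 + Y ^ b) * RHS Y a b"
proof -
  define N where "N = a + b"
  define T where "T = (\<lambda>m. Y ^ tri (int m - int a))"
  define S where "S = (\<Sum>m\<in>{0..N}. qb Y N m * T m)"
  have "RHS Y a (Suc b) = (\<Sum>m\<in>{0..Suc N}. qb Y (Suc N) m * T m)"
    by (simp add: RHS_def N_def T_def del: qb.simps)
  also have "\<dots> = T 0 + (\<Sum>m\<in>{0..N}. qb Y (Suc N) (Suc m) * T (Suc m))"
    by (subst sum.atLeast0_atMost_Suc_shift) (simp del: qb.simps)
  also have "\<dots> = (T 0 + (\<Sum>m\<in>{0..N}. qb Y N (Suc m) * T (Suc m)))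
        + (\<Sum>m\<in>{0..N}. Y ^ (N - m) * qb Y N m * T (Suc m))"
    by (simp only: qb_pascal2 distrib_right sum.distrib add.assoc)
  also have "T 0 + (\<Sum>m\<in>{0..N}. qb Y N (Suc m) * T (Suc m)) = S"
  proof -
    have "T 0 + (\<Sum>m\<in>{0..N}. qb Y N (Suc m) * T (Suc m))
        = (\<Sum>m\<in>{0..Suc N}. qb Y N m * T m)"
      by (subst sum.atLeast0_atMost_Suc_shift) (simp del: qb.simps)
    also have "\<dots> = S"
      by (simp add: qb_zero S_def del: qb.simps)
    finally show ?thesis .
  qed
  also have "(\<Sum>m\<in>{0..N}. Y ^ (N - m) * qb Y N m * T (Suc m)) = Y ^ b * S"
    unfolding S_def sum_distrib_left
  proof (rule sum.cong[OF refl])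
    fix m assume m: "m \<in> {0..N}"
    have "Y ^ (N - m) * T (Suc m) = Y ^ b * T m"
      using ex2[of m a b] m unfolding N_def T_def by (simp only: power_add[symmetric] atLeastAtMost_iff)
    then have "qb Y N m * (Y ^ (N - m) * T (Suc m)) = qb Y N m * (Y ^ b * T m)" by simp
    then show "Y ^ (N - m) * qb Y N m * T (Suc m) = Y ^ b * (qb Y N m * T m)"
      by (simp only: mult_ac)
  qed
  also have "RHS Y a b = S" by (simp add: RHS_def N_def S_def T_def)
  ultimately show ?thesis by (simp add: distrib_right)
qed

lemma JTP_fin: "LHS Y a b = RHS Y a b"
proof (induction b)
  case 0
  show ?case
  proof (induction a)
    case 0 then show ?case by (simp add: LHS_def RHS_def tri_def)
  next
    case (Suc a)
    have "LHS Y (Suc a) 0 = (1 + Y ^ Suc a) * LHS Y a 0"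
      by (simp add: LHS_def prod.nat_ivl_Suc' algebra_simps)
    then show ?case using Suc RHS_a by simp
  qed
next
  case (Suc b)
  have "LHS Y a (Suc b) = (1 + Y ^ b) * LHS Y a b"
    by (simp add: LHS_def algebra_simps)
  then show ?case using Suc RHS_b by simp
qed



lemma prodY_Suc: "prodY Y k (Suc n) = prodY Y k n * (1 - Y ^ (Suc n * k))"
  unfolding prodY_def by (simp add: prod.nat_ivl_Suc')

lemma prodY_zero[simp]: "prodY Y k 0 = 1" by (simp add: prodY_def)

lemma alg1: fixes y yd q1 q0 p0 pd1 :: "'a::comm_ring_1"
  shows "(y * q1 + q0) * (p0 * (1 - y)) * (pd1 * (1 - yd))
    = y * (1 - yd) * (q1 * (p0 * (1 - y)) * pd1) + (1 - y) * (q0 * p0 * (pd1 * (1 - yd)))"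
  by (simp add: algebra_simps)

lemma alg2: fixes y yd c :: "'a::comm_ring_1"
  shows "y * (1 - yd) * c + (1 - y) * c = c * (1 - y * yd)"
  by (simp add: algebra_simps)

lemma qb_top[simp]: "qb Y N N = 1"
  by (induction N) (auto simp: qb_zero)

lemma qb_prod: "m \<le> N \<Longrightarrow> qb Y N m * prodY Y 1 m * prodY Y 1 (N - m) = prodY Y 1 N"
proof (induction N arbitrary: m)
  case 0 then show ?case by simp
next
  case (Suc N)
  show ?case
  proof (cases m)
    case 0 then show ?thesis by simp
  next
    case (Suc m')
    define P where "P = prodY Y 1"
    have m': "m' \<le> N" using Suc.prems Suc by simp
    have eq: "qb Y (Suc N) m = Y ^ Suc m' * qb Y N (Suc m') + qb Y N m'" using Suc by simp
    have Pm: "P (Suc m') = P m' * (1 - Y ^ Suc m')" by (simp add: P_def prodY_Suc)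
    have PN: "P (Suc N) = P N * (1 - Y ^ Suc N)" by (simp add: P_def prodY_Suc)
    show ?thesis
    proof (cases "m' = N")
      case True
      have "qb Y N (Suc m') = 0" using True by (simp add: qb_zero)
      moreover have "qb Y N m' * P m' * P (N - m') = P N" using Suc.IH[of m'] m' by (simp add: P_def)
      then show ?thesis using True Suc by (simp add: P_def)
    next
      case False
      then have lt: "Suc m' \<le> N" using m' by simp
      have h1: "qb Y N (Suc m') * P (Suc m') * P (N - Suc m') = P N" using Suc.IH[of "Suc m'"] lt by (simp add: P_def)
      have h2: "qb Y N m' * P m' * P (N - m') = P N" using Suc.IH[of m'] m' by (simp add: P_def)
      have d: "N - m' = Suc (N - Suc m')" using lt by simp
      have Pd: "P (N - m') = P (N - Suc m') * (1 - Y ^ (N - m'))" unfolding d by (simp add: P_def prodY_Suc)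
      have pw: "Y ^ Suc m' * Y ^ (N - m') = Y ^ Suc N" using lt by (simp add: power_add[symmetric])
      have e2: "P (Suc N - m) = P (N - m')" using Suc by simp
      have "qb Y (Suc N) m * P m * P (Suc N - m)
          = (Y ^ Suc m' * qb Y N (Suc m') + qb Y N m') * P (Suc m') * P (N - m')"
        using eq e2 Suc by simp
      also have "\<dots> = Y ^ Suc m' * (1 - Y ^ (N - m')) * (qb Y N (Suc m') * P (Suc m') * P (N - Suc m'))
            + (1 - Y ^ Suc m') * (qb Y N m' * P m' * P (N - m'))"
        unfolding Pm Pd by (rule alg1)
      also have "\<dots> = P N * (1 - Y ^ Suc m' * Y ^ (N - m'))"
        unfolding h1 h2 by (rule alg2)
      also have "\<dots> = P (Suc N)" unfolding pw PN ..
      finally show ?thesis by (simp add: P_def)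
    qed
  qed
qed

lemma qb_lim: assumes "Y $ 0 = 0" "m \<le> N" "M \<le> m" "M \<le> N - m"
  shows "eqto M (qb Y N m * prodY Y 1 M) 1"
proof -
  define P where "P = prodY Y 1 M"
  have P0: "P $ 0 = 1" unfolding P_def by (rule prodY_0[OF assms(1)]) simp
  have "eqto M (qb Y N m * prodY Y 1 m * prodY Y 1 (N - m)) (qb Y N m * P * P)"
    unfolding P_def using assms by (intro eqto_mult eqto_refl prodY_stab) auto
  moreover have "eqto M (prodY Y 1 N) P"
    unfolding P_def using assms by (intro prodY_stab) auto
  ultimately have "eqto M (qb Y N m * P * P) P"
    using qb_prod[OF assms(2)] eqto_trans eqto_sym by metis
  then have "eqto M ((qb Y N m * P) * P) (1 * P)" by simp
  then show ?thesis using eqto_cancel P0 by (simp add: P_def)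
qed

lemma tri_big: assumes "int M + 2 \<le> x \<or> x \<le> - int M - 2" shows "M < tri x"
proof -
  have h: "2 * int (tri x) = x * (x - 1)" by (rule tri_lemma)
  have "2 * int M + 2 \<le> x * (x - 1)"
    using assms
  proof
    assume a: "int M + 2 \<le> x"
    have "2 * (x - 1) \<le> x * (x - 1)" using a by (intro mult_right_mono) auto
    then show ?thesis using a by (simp add: algebra_simps)
  next
    assume a: "x \<le> - int M - 2"
    have "(-x) * 2 \<le> (-x) * (1 - x)" using a by (intro mult_left_mono) auto
    then show ?thesis using a by (simp add: algebra_simps)
  qed
  then show ?thesis using h by linarith
qed

definition Theta :: "rat fps \<Rightarrow> nat \<Rightarrow> rat fps" where
  "Theta Y L = (\<Sum>m\<in>{0..2*L}. Y ^ tri (int m - int L))"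

lemma prod_lessThan_2: "(\<Prod>j\<in>{..<Suc n}. (1 + Y ^ j)) = fps_const 2 * (\<Prod>j\<in>{1..n}. (1 + (Y::rat fps) ^ j))"
proof (induction n)
  case 0 then show ?case by (simp add: fps_numeral_fps_const[symmetric])
next
  case (Suc n)
  have "(\<Prod>j\<in>{..<Suc (Suc n)}. (1 + Y ^ j)) = (\<Prod>j\<in>{..<Suc n}. (1 + Y ^ j)) * (1 + Y ^ Suc n)"
    by simp
  also have "\<dots> = fps_const 2 * ((\<Prod>j\<in>{1..n}. (1 + Y ^ j)) * (1 + Y ^ Suc n))"
    using Suc by (simp add: mult.assoc)
  also have "(\<Prod>j\<in>{1..n}. (1 + Y ^ j)) * (1 + Y ^ Suc n) = (\<Prod>j\<in>{1..Suc n}. (1 + Y ^ j))"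
    by (simp add: prod.nat_ivl_Suc')
  finally show ?case .
qed

lemma JTP_lim: assumes Y0: "Y $ 0 = 0"
  shows "eqto M (fps_const 2 * (\<Prod>j\<in>{1..M}. (1 + Y ^ j)) ^ 2 * prodY Y 1 M) (Theta Y (2 * M + 2))"
proof -
  define L where "L = 2 * M + 2"
  define R where "R = (\<Prod>j\<in>{1..M}. (1 + Y ^ j))"
  define P where "P = prodY Y 1 M"
  have stR: "eqto M (\<Prod>j\<in>{1..K}. (1 + Y ^ j)) R" if "M \<le> K" for K
    unfolding R_def
  proof (rule stab[OF _ that])
    fix j assume "M < j"
    then have "eqto M (1 + Y ^ j) (1 + 0)" by (intro eqto_add eqto_refl eqto_pow_zero Y0)
    then show "eqto M (1 + Y ^ j) 1" by simp
  qed
  have "LHS Y L L = (\<Prod>j\<in>{1..L}. (1 + Y ^ j)) * (fps_const 2 * (\<Prod>j\<in>{1..2*M+1}. (1 + Y ^ j)))"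
    unfolding LHS_def L_def by (simp only: prod_lessThan_2[symmetric]) simp
  moreover have "eqto M ((\<Prod>j\<in>{1..L}. (1 + Y ^ j)) * (fps_const 2 * (\<Prod>j\<in>{1..2*M+1}. (1 + Y ^ j))))
      (R * (fps_const 2 * R))"
    by (intro eqto_mult eqto_refl stR) (auto simp: L_def)
  ultimately have "eqto M (LHS Y L L) (R * (fps_const 2 * R))" by simp
  then have "eqto M (LHS Y L L * P) (R * (fps_const 2 * R) * P)" by (intro eqto_mult eqto_refl)
  moreover have "R * (fps_const 2 * R) * P = fps_const 2 * R ^ 2 * P"
    by (simp add: power2_eq_square mult_ac)
  ultimately have l: "eqto M (LHS Y L L * P) (fps_const 2 * R ^ 2 * P)" by simp
  have "LHS Y L L * P = (\<Sum>m\<in>{0..2*L}. qb Y (2*L) m * Y ^ tri (int m - int L) * P)"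
    by (simp add: JTP_fin RHS_def sum_distrib_right mult_2)
  moreover have "eqto M (\<Sum>m\<in>{0..2*L}. qb Y (2*L) m * Y ^ tri (int m - int L) * P) (Theta Y L)"
    unfolding Theta_def
  proof (rule eqto_sum)
    fix m assume m: "m \<in> {0..2*L}"
    show "eqto M (qb Y (2*L) m * Y ^ tri (int m - int L) * P) (Y ^ tri (int m - int L))"
    proof (cases "M \<le> m \<and> M \<le> 2*L - m")
      case True
      have "eqto M (qb Y (2*L) m * P) 1" unfolding P_def using True m by (intro qb_lim Y0) auto
      then have "eqto M ((qb Y (2*L) m * P) * Y ^ tri (int m - int L)) (1 * Y ^ tri (int m - int L))"
        by (intro eqto_mult eqto_refl)
      then show ?thesis by (simp add: mult_ac)
    next
      case False
      then have "M < tri (int m - int L)" using m by (intro tri_big) (auto simp: L_def)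
      then have z: "eqto M (Y ^ tri (int m - int L)) 0" by (intro eqto_pow_zero Y0)
      then have "eqto M (qb Y (2*L) m * Y ^ tri (int m - int L) * P) (qb Y (2*L) m * 0 * P)"
        by (intro eqto_mult eqto_refl)
      then have "eqto M (qb Y (2*L) m * Y ^ tri (int m - int L) * P) 0" by simp
      then show ?thesis using eqto_trans eqto_sym[OF z] by blast
    qed
  qed
  ultimately have "eqto M (LHS Y L L * P) (Theta Y L)" by simp
  then have "eqto M (fps_const 2 * R ^ 2 * P) (Theta Y L)" using eqto_trans eqto_sym[OF l] by blast
  then show ?thesis unfolding R_def P_def L_def .
qed



lemma negX_pow: "(- fps_X :: rat fps) ^ n = fps_const ((-1) ^ n) * fps_X ^ n"
  by (induction n) (simp_all add: mult_ac fps_const_neg[symmetric] del: fps_const_neg)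

lemma negX_pow_nth: "((- fps_X :: rat fps) ^ n) $ k = (if k = n then (-1) ^ n else 0)"
  unfolding negX_pow by simp

lemma tri_mod3: "tri x mod 3 \<noteq> 2"
proof
  assume a: "tri x mod 3 = 2"
  have h: "2 * int (tri x) = x * (x - 1)" by (rule tri_lemma)
  have t: "int (tri x) mod 3 = 2" using a zmod_int[of "tri x" 3] by simp
  have "(x * (x - 1)) mod 3 = (2 * int (tri x)) mod 3" by (simp add: h)
  also have "\<dots> = (2 * (int (tri x) mod 3)) mod 3" by (simp add: mod_mult_right_eq)
  also have "\<dots> = 1" using t by simp
  finally have c1: "(x * (x - 1)) mod 3 = 1" .
  define q where "q = x div 3"
  define r where "r = x mod 3"
  have x: "x = 3 * q + r" by (simp add: q_def r_def)
  have r: "r = 0 \<or> r = 1 \<or> r = 2" unfolding r_def by auto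
  define Z where "Z = 3 * q * q + q * (2 * r - 1)"
  have "x * (x - 1) = r * (r - 1) + Z * 3" unfolding x Z_def by (simp add: algebra_simps)
  then have "(x * (x - 1)) mod 3 = (r * (r - 1)) mod 3" by (simp only: mod_mult_self1)
  then show False using c1 r by auto
qed

lemma Theta_negX: assumes "k mod 3 = 2" shows "Theta (- fps_X) L $ k = 0"
  unfolding Theta_def fps_sum_nth
proof (rule sum.neutral, intro ballI)
  fix m
  have "k \<noteq> tri (int m - int L)" using assms tri_mod3 by metis
  then show "((- fps_X :: rat fps) ^ tri (int m - int L)) $ k = 0" unfolding negX_pow_nth by simp
qed

lemma alg3: fixes P0 Q0 F0 G0 H0 a b :: "'a::comm_ring_1"
  assumes "P0 * Q0 * F0 = G0 * H0 ^ 2"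
  shows "P0 * (1 - - a) * (1 - b) * (Q0 * (1 - a) * (1 - b)) * (F0 * (1 - b ^ 2))
       = G0 * (1 - a ^ 2) * (1 - b ^ 2) * (H0 * (1 - b)) ^ 2"
proof -
  have "P0 * (1 - - a) * (1 - b) * (Q0 * (1 - a) * (1 - b)) * (F0 * (1 - b ^ 2))
      = (P0 * Q0 * F0) * ((1 + a) * (1 - a) * (1 - b) * (1 - b) * (1 - b ^ 2))" by (simp add: mult_ac)
  also have "\<dots> = G0 * H0 ^ 2 * ((1 + a) * (1 - a) * (1 - b) * (1 - b) * (1 - b ^ 2))" using assms by simp
  also have "\<dots> = G0 * (1 - a ^ 2) * (1 - b ^ 2) * (H0 * (1 - b)) ^ 2"
    by (simp add: algebra_simps power2_eq_square)
  finally show ?thesis .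
qed

lemma parity: "prodY (- fps_X) 1 (2 * K) * prodY fps_X 1 (2 * K) * prodY fps_X 4 K
   = prodY fps_X 2 (2 * K) * prodY fps_X 2 K ^ 2"
proof (induction K)
  case 0 then show ?case by simp
next
  case (Suc K)
  define a where "a = (fps_X :: rat fps) ^ (Suc (2 * K))"
  define b where "b = (fps_X :: rat fps) ^ (Suc (Suc (2 * K)))"
  have s: "2 * Suc K = Suc (Suc (2 * K))" by simp
  have e1: "(- fps_X :: rat fps) ^ (Suc (2 * K) * 1) = - a"
    unfolding a_def by (simp add: negX_pow fps_const_neg[symmetric])
  have e2: "(- fps_X :: rat fps) ^ (Suc (Suc (2 * K)) * 1) = b"
    unfolding b_def by (simp add: negX_pow)
  have e3: "(fps_X :: rat fps) ^ (Suc (2 * K) * 1) = a" by (simp add: a_def)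
  have e4: "(fps_X :: rat fps) ^ (Suc (Suc (2 * K)) * 1) = b" by (simp add: b_def)
  have x5: "Suc K * 4 = Suc (Suc (2 * K)) * 2" by simp
  have x6: "Suc (2 * K) * 2 = Suc (2 * K) * 2" by simp
  have e5: "(fps_X :: rat fps) ^ (Suc K * 4) = b ^ 2" unfolding b_def x5 by (rule power_mult)
  have e6: "(fps_X :: rat fps) ^ (Suc (2 * K) * 2) = a ^ 2" unfolding a_def by (rule power_mult)
  have e7: "(fps_X :: rat fps) ^ (Suc (Suc (2 * K)) * 2) = b ^ 2" unfolding b_def by (rule power_mult)
  have x8: "Suc K * 2 = Suc (Suc (2 * K))" by simp
  have e8: "(fps_X :: rat fps) ^ (Suc K * 2) = b" unfolding b_def x8 ..
  show ?case
    unfolding s prodY_Suc e1 e2 e3 e4 e5 e6 e7 e8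
    by (rule alg3[OF Suc.IH])
qed

lemma RP: "(\<Prod>j\<in>{1..M}. (1 + (- fps_X) ^ j)) * prodY (- fps_X) 1 M = prodY fps_X 2 M"
proof -
  have "(\<Prod>j\<in>{1..M}. (1 + (- fps_X) ^ j)) * prodY (- fps_X) 1 M
      = (\<Prod>j\<in>{1..M}. (1 + (- fps_X :: rat fps) ^ j) * (1 - (- fps_X) ^ j))"
    unfolding prodY_def by (simp add: prod.distrib)
  also have "\<dots> = (\<Prod>j\<in>{1..M}. 1 - (fps_X :: rat fps) ^ (j * 2))"
  proof (rule prod.cong[OF refl])
    fix j
    have "(1 + (- fps_X :: rat fps) ^ j) * (1 - (- fps_X) ^ j) = 1 - (- fps_X) ^ j * (- fps_X) ^ j"
      by (simp add: algebra_simps)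
    also have "(- fps_X :: rat fps) ^ j * (- fps_X) ^ j = ((- fps_X) * (- fps_X)) ^ j"
      by (rule power_mult_distrib[symmetric])
    also have "\<dots> = (fps_X ^ 2) ^ j" by (simp add: power2_eq_square)
    also have "\<dots> = (fps_X :: rat fps) ^ (j * 2)" by (simp add: power_mult[symmetric] mult.commute)
    finally show "(1 + (- fps_X :: rat fps) ^ j) * (1 - (- fps_X) ^ j) = 1 - fps_X ^ (j * 2)" .
  qed
  finally show ?thesis by (simp add: prodY_def)
qed



lemma pw: fixes a b c :: "'a::comm_ring_1"
  shows "(c ^ (3 * i + 1) * b ^ 3) * (b * (a ^ 3 * (b ^ 3) ^ (2 * i))) = (a * c * (c ^ 3) ^ i) * (a ^ 2 * b ^ (6 * i + 4))"
proof -
  have h1: "c ^ (3 * i + 1) = (c ^ i) ^ 3 * c" by (simp add: power_add power_mult[symmetric] mult.commute)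
  have h2: "(c ^ 3) ^ i = (c ^ i) ^ 3" by (simp add: power_mult[symmetric] mult.commute)
  have h3: "(b ^ 3) ^ (2 * i) = (b ^ i) ^ 6" by (simp add: power_mult[symmetric] mult.commute)
  have h4: "b ^ (6 * i + 4) = (b ^ i) ^ 6 * b ^ 4" by (simp add: power_add power_mult[symmetric] mult.commute)
  show ?thesis unfolding h1 h2 h3 h4 by (simp add: power_numeral_reduce mult_ac)
qed

lemma W_good: "goodM M (prodY fps_X 1 M * prodY fps_X 4 M * inverse (prodY fps_X 2 M))"
proof -
  define Y where "Y = (- fps_X :: rat fps)"
  have Y0: "Y $ 0 = 0" by (simp add: Y_def)
  define P where "P = prodY Y 1 M"
  define R where "R = (\<Prod>j\<in>{1..M}. (1 + Y ^ j))"
  define E1 where "E1 = prodY fps_X 1 M"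
  define E2 where "E2 = prodY fps_X 2 M"
  define E4 where "E4 = prodY fps_X 4 M"
  define W where "W = E1 * E4 * inverse E2"
  have P0: "P $ 0 = 1" unfolding P_def by (rule prodY_0[OF Y0]) simp
  have E20: "E2 $ 0 = 1" unfolding E2_def by (rule prodY_0) simp_all
  have "eqto M (prodY Y 1 (2 * M) * prodY fps_X 1 (2 * M) * prodY fps_X 4 M)
               (prodY fps_X 2 (2 * M) * prodY fps_X 2 M ^ 2)"
    unfolding Y_def parity by simp
  moreover have "eqto M (prodY Y 1 (2 * M) * prodY fps_X 1 (2 * M) * prodY fps_X 4 M) (P * E1 * E4)"
    unfolding P_def E1_def E4_def by (intro eqto_mult eqto_refl prodY_stab Y0) simp_all
  moreover have "eqto M (prodY fps_X 2 (2 * M) * prodY fps_X 2 M ^ 2) (E2 * E2 ^ 2)"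
    unfolding E2_def by (intro eqto_mult eqto_refl prodY_stab) simp_all
  ultimately have par: "eqto M (P * E1 * E4) (E2 * E2 ^ 2)" by (meson eqto_sym eqto_trans)
  have X: "eqto M ((P * E1 * E4) * inverse E2) ((E2 * E2 ^ 2) * inverse E2)"
    by (intro eqto_mult par eqto_refl)
  have eq1: "(P * E1 * E4) * inverse E2 = W * P" by (simp add: W_def mult_ac)
  have eq2: "(E2 * E2 ^ 2) * inverse E2 = E2 ^ 2"
    using inverse_mult_eq_1'[of E2] E20 by (simp add: mult_ac)
  have E2eq: "E2 = R * P" using RP[of M] by (simp add: R_def P_def E2_def Y_def)
  have eq3: "E2 ^ 2 = (R ^ 2 * P) * P" unfolding E2eq by (simp add: power2_eq_square mult_ac)
  have "eqto M (W * P) (E2 ^ 2)" using X unfolding eq1 eq2 .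
  then have "eqto M (W * P) ((R ^ 2 * P) * P)" unfolding eq3 .
  then have WR: "eqto M W (R ^ 2 * P)" using eqto_cancel P0 by simp
  have J: "eqto M (fps_const 2 * R ^ 2 * P) (Theta Y (2 * M + 2))"
    unfolding R_def P_def by (rule JTP_lim[OF Y0])
  have "eqto M (fps_const 2 * W) (fps_const 2 * (R ^ 2 * P))" by (intro eqto_mult eqto_refl WR)
  then have TW: "eqto M (fps_const 2 * W) (Theta Y (2 * M + 2))" using J eqto_trans by (simp add: mult.assoc)
  show ?thesis unfolding goodM_def W_def[symmetric] E1_def[symmetric] E2_def[symmetric] E4_def[symmetric]
  proof (intro allI impI)
    fix k assume k: "k \<le> M" "k mod 3 = 2"
    have "2 * W $ k = Theta Y (2 * M + 2) $ k" using TW k by (simp add: eqto_def)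
    also have "\<dots> = 0" unfolding Y_def by (rule Theta_negX[OF k(2)])
    finally show "d3 (W $ k)" by simp
  qed
qed

theorem mainTheorem3:
  fixes n i :: nat
  assumes "i \<ge> 1"
  shows "\<exists>k::int. abar (3 * i + 2) (3 * n + 2) = of_int (3 * k)"
proof -
  define M where "M = 3 * n + 2"
  define E where "E = (\<lambda>m. prodY fps_X m M)"
  have E0: "\<And>m. 1 \<le> m \<Longrightarrow> E m $ 0 = 1" unfolding E_def by (rule prodY_0) simp_all
  have Ei: "\<And>m. intc (E m)" unfolding E_def by (intro intc_prodY) simp
  define W where "W = E 1 * E 4 * inverse (E 2)"
  define H where "H = E 12 ^ i * inverse (E 3 * E 6 ^ (2 * i))"
  define N where "N = E 4 ^ (3 * i + 1) * E 2 ^ 3"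
  define D where "D = E 1 ^ 2 * E 2 ^ (6 * i + 4)"
  define N' where "N' = E 1 * E 4 * E 12 ^ i"
  define D' where "D' = E 2 * (E 3 * E 6 ^ (2 * i))"
  have T: "Tfin (3 * i + 2) M = N * inverse D"
  proof -
    have e1: "3 * i + 2 - 1 = 3 * i + 1" "2 * (3 * i + 2) = 6 * i + 4" by simp_all
    show ?thesis unfolding Tfin_def N_def D_def E_def e1 ..
  qed
  have WH: "W * H = N' * inverse D'"
    unfolding W_def H_def N'_def D'_def by (simp add: fps_inverse_mult mult_ac)
  have gW: "goodM M W" unfolding W_def E_def by (rule W_good)
  have iW: "intc W" unfolding W_def using Ei E0 by (intro intc_mult intc_inverse) simp_all
  have D0: "(E 3 * E 6 ^ (2 * i)) $ 0 = 1" using E0 by (simp add: fps_power_zeroth)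
  have iH: "intc H" unfolding H_def using Ei D0 by (intro intc_mult intc_inverse intc_power) simp_all
  have sE: "\<And>m. sup3 (E (3 * m))" unfolding E_def by (rule sup3_prodY)
  have sH: "sup3 H" unfolding H_def
    using sE[of 4] sE[of 1] sE[of 2] D0 by (intro sup3_mult sup3_power sup3_inverse) simp_all
  have gWH: "goodM M (W * H)" by (rule good_mult_sup3[OF gW iW iH sH])
  have c1: "cong3 (E 3) (E 1 ^ 3)" using prodY_cube[of fps_X 1 M] unfolding E_def
    by (simp add: cong3_sym)
  have c2: "cong3 (E 6) (E 2 ^ 3)" using prodY_cube[of fps_X 2 M] unfolding E_def
    by (simp add: cong3_sym)
  have c4: "cong3 (E 12) (E 4 ^ 3)" using prodY_cube[of fps_X 4 M] unfolding E_def
    by (simp add: cong3_sym)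
  have iN: "intc N" unfolding N_def using Ei by (intro intc_mult intc_power)
  have iN': "intc N'" unfolding N'_def using Ei by (intro intc_mult intc_power)
  have iD: "intc D" unfolding D_def using Ei by (intro intc_mult intc_power)
  have iD': "intc D'" unfolding D'_def using Ei by (intro intc_mult intc_power)
  have "cong3 (N * D') (N * (E 2 * (E 1 ^ 3 * (E 2 ^ 3) ^ (2 * i))))"
    unfolding D'_def using Ei iN
    by (intro cong3_mult cong3_refl cong3_power c1 c2 intc_mult intc_power) simp_all
  moreover have "N * (E 2 * (E 1 ^ 3 * (E 2 ^ 3) ^ (2 * i))) = (E 1 * E 4 * (E 4 ^ 3) ^ i) * D"
    unfolding N_def D_def by (rule pw)
  moreover have "cong3 ((E 1 * E 4 * (E 4 ^ 3) ^ i) * D) (N' * D)"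
    unfolding N'_def using Ei iD
    by (intro cong3_mult cong3_refl cong3_power c4 cong3_sym intc_mult intc_power) simp_all
  ultimately have cND: "cong3 (N * D') (N' * D)" using cong3_trans by metis
  have D0': "D $ 0 = 1" unfolding D_def using E0 by (simp add: fps_power_zeroth)
  have D0'': "D' $ 0 = 1" unfolding D'_def using E0 D0 by simp
  have "cong3 (N * inverse D) (N' * inverse D')"
    by (rule cong3_frac[OF iN iN' iD iD' D0' D0'' cND])
  then have "cong3 (Tfin (3 * i + 2) M) (W * H)" using T WH by simp
  then have "goodM M (Tfin (3 * i + 2) M)" using good_cong gWH by blast
  moreover have "M mod 3 = 2" unfolding M_def by presburger
  ultimately have "d3 (Tfin (3 * i + 2) M $ M)" unfolding goodM_def by blast
  then have "d3 (abar (3 * i + 2) M)" using abar_Tfin[of M M] by simp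
  then obtain z where "abar (3 * i + 2) M / 3 = of_int z" unfolding d3_def by (auto elim: Ints_cases)
  then have "abar (3 * i + 2) (3 * n + 2) = of_int (3 * z)" unfolding M_def by simp
  then show ?thesis by blast
qed


end
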